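(* For every $n\ge1$, with $M_n$ the array indexed by $\{0,\dots,n\}^3$ defined by $(M_n)_{i,j,k}=\min\big(k\min(i,j),\ ij-(n-k)\max(0,i+j-n)\big)$, $$\sum_{0\le i,j,k\le n}(M_n)_{i,j,k}=\frac{69n^5+180n^4+170n^3+60n^2+4^{1+(-1)^n}\,n}{480}.$$
   Context: $M_n$ is the minimum element of the lattice of corner-sum hypermatrices of order $n$ (ordered by reverse entrywise comparison), i.e. the entrywise largest corner-sum hypermatrix. *)

theory Defs
  imports Complex_Main
begin

definition Mn :: "int \<Rightarrow> int \<Rightarrow> int \<Rightarrow> int \<Rightarrow> int" where
  "Mn n i j k = min (k * min i j) (i * j - (n - k) * max 0 (i + j - n))"

end

theory Submission
  imports Defs
begin

definition A :: "real \<Rightarrow> real \<Rightarrow> real \<Rightarrow> real" where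
  "A N I J = I * (2 * N * J - J^2 + J) / 2"

definition B :: "real \<Rightarrow> real \<Rightarrow> real \<Rightarrow> real" where
  "B N I J = I * N * (N + 1) / 2 - (N - J) * I * (I + 1) / 2"

definition U1 :: "real \<Rightarrow> real \<Rightarrow> real" where
  "U1 N I = ((1/6)*I*N + (1/2)*I*N^2 + (1/3)*I*N^3 + (1/6)*I^2 + (-1/6)*I^4)"

definition U2 :: "real \<Rightarrow> real \<Rightarrow> real" where
  "U2 N I = ((1/2)*I*N^2 + (5/6)*I*N^3 + (1/6)*I^2 + (-1)*I^2*N^2 + (2/3)*I^3*N + (-1/6)*I^4 + (1/12)*N^2 + (-1/12)*N^4)"

lemma tel:
  fixes F f :: "real \<Rightarrow> real" and a b :: int
  assumes d: "\<And>x. F x - F (x - 1) = f x" and ab: "a \<le> b + 1"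
  shows "(\<Sum>x\<in>{a..b}. f (real_of_int x)) = F (real_of_int b) - F (real_of_int a - 1)"
proof -
  from ab have "a - 1 \<le> b" by simp
  then show ?thesis
proof (induction b rule: int_ge_induct)
  case base
  then show ?case by simp
next
  case (step b)
  have e: "{a..b+1} = insert (b+1) {a..b}" using step.hyps by auto
  have "(\<Sum>x\<in>{a..b+1}. f (real_of_int x)) = f (real_of_int (b+1)) + (\<Sum>x\<in>{a..b}. f (real_of_int x))"
    unfolding e by simp
  also have "\<dots> = F (real_of_int b + 1) - F (real_of_int a - 1)"
    using step.IH d[of "real_of_int b + 1"] by simp
  finally show ?case by simp
qed
qed

lemma isplit:
  fixes g :: "int \<Rightarrow> real"
  assumes "a \<le> b + 1" "b \<le> c"
  shows "sum g {a..c} = sum g {a..b} + sum g {b+1..c}"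
proof -
  have "{a..c} = {a..b} \<union> {b+1..c}" using assms by auto
  moreover have "{a..b} \<inter> {b+1..c} = {}" by auto
  ultimately show ?thesis by (simp add: sum.union_disjoint)
qed

lemma MnA:
  assumes "0 \<le> i" "i \<le> j" "i + j \<le> n" "0 \<le> k"
  shows "Mn n i j k = i * min k j"
proof -
  have "max 0 (i + j - n) = 0" using assms by simp
  moreover have "min i j = i" using assms by simp
  moreover have "min (k * i) (i * j) = i * min k j"
  proof (cases "k \<le> j")
    case True
    then have "k * i \<le> i * j" using mult_left_mono[of k j i] assms by (simp add: mult.commute)
    then show ?thesis using True by (simp add: min_def)
  next
    case False
    then have "i * j \<le> k * i" using mult_left_mono[of j k i] assms by (simp add: mult.commute)
    then show ?thesis using False by (simp add: min_def mult.commute)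
  qed
  ultimately show ?thesis unfolding Mn_def by (simp add: mult.commute)
qed

lemma MnB:
  assumes "0 \<le> i" "i \<le> j" "j \<le> n" "n < i + j" "0 \<le> k"
  shows "Mn n i j k = (if k \<le> n - i then k * i else k * i - (k - (n - i)) * (n - j))"
proof -
  have m1: "max 0 (i + j - n) = i + j - n" using assms by simp
  have m2: "min i j = i" using assms by simp
  have id: "i * j - (n - k) * (i + j - n) = k * i + (n - j) * (n - i - k)" by algebra
  have id2: "i * j - (n - k) * (i + j - n) = k * i - (k - (n - i)) * (n - j)" by algebra
  show ?thesis
  proof (cases "k \<le> n - i")
    case True
    have "0 \<le> (n - j) * (n - i - k)" using assms True by simp
    then show ?thesis unfolding Mn_def m1 m2 id using True by simp
  next
    case False
    have "0 \<le> (k - (n - i)) * (n - j)" using assms False by simp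
    then show ?thesis unfolding Mn_def m1 m2 id2 using False by simp
  qed
qed

lemma Mn_sym: "Mn n i j k = Mn n j i k"
  unfolding Mn_def by (simp add: min.commute add.commute mult.commute)


lemma kA:
  assumes "0 \<le> i" "i \<le> j" "i + j \<le> n"
  shows "(\<Sum>k\<in>{0..n}. real_of_int (Mn n i j k)) = A (real_of_int n) (real_of_int i) (real_of_int j)"
proof -
  define N I J where "N = real_of_int n" and "I = real_of_int i" and "J = real_of_int j"
  have s: "(\<Sum>k\<in>{0..n}. real_of_int (Mn n i j k)) = (\<Sum>k\<in>{0..j}. real_of_int (Mn n i j k)) + (\<Sum>k\<in>{j+1..n}. real_of_int (Mn n i j k))"
    by (rule isplit) (use assms in auto)
  have 1: "(\<Sum>k\<in>{0..j}. real_of_int (Mn n i j k)) = (\<Sum>k\<in>{0..j}. I * real_of_int k)"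
  proof (rule sum.cong)
    fix k assume "k \<in> {0..j}"
    then have k: "0 \<le> k" "k \<le> j" by auto
    show "real_of_int (Mn n i j k) = I * real_of_int k"
      using MnA[OF assms k(1)] k by (simp add: min_def I_def)
  qed simp
  have 2: "(\<Sum>k\<in>{j+1..n}. real_of_int (Mn n i j k)) = (\<Sum>k\<in>{j+1..n}. I * J)"
  proof (rule sum.cong)
    fix k assume "k \<in> {j+1..n}"
    then have k: "0 \<le> k" "j < k" using assms by auto
    show "real_of_int (Mn n i j k) = I * J"
      using MnA[OF assms k(1)] k by (simp add: min_def I_def J_def)
  qed simp
  define F1 where "F1 = (\<lambda>x::real. ((1/2)*I*x + (1/2)*I*x^2))"
  have 3: "(\<Sum>k\<in>{0..j}. I * real_of_int k) = F1 (real_of_int (j)) - F1 (real_of_int (0) - 1)"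
    apply (rule tel[where f = "\<lambda>x. I * x"])
    subgoal for x unfolding F1_def A_def B_def U1_def U2_def by ((simp add: field_simps)?; (algebra)?)
    using assms by simp
  define F2 where "F2 = (\<lambda>x::real. ((1)*I*J + (1)*I*J*x))"
  have 4: "(\<Sum>k\<in>{j+1..n}. I * J) = F2 (real_of_int (n)) - F2 (real_of_int (j+1) - 1)"
    apply (rule tel[where f = "\<lambda>x. I * J"])
    subgoal for x unfolding F2_def A_def B_def U1_def U2_def by ((simp add: field_simps)?; (algebra)?)
    using assms by simp
  show ?thesis unfolding s 1 2 3 4
    by (simp only: A_def F1_def F2_def of_int_diff of_int_add of_int_0 of_int_1 N_def[symmetric] I_def[symmetric] J_def[symmetric]) ((simp add: field_simps)?; (algebra)?)
qed

lemma kB: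
  assumes "0 \<le> i" "i \<le> j" "j \<le> n" "n < i + j"
  shows "(\<Sum>k\<in>{0..n}. real_of_int (Mn n i j k)) = B (real_of_int n) (real_of_int i) (real_of_int j)"
proof -
  define N I J where "N = real_of_int n" and "I = real_of_int i" and "J = real_of_int j"
  have s: "(\<Sum>k\<in>{0..n}. real_of_int (Mn n i j k)) = (\<Sum>k\<in>{0..n-i}. real_of_int (Mn n i j k)) + (\<Sum>k\<in>{n-i+1..n}. real_of_int (Mn n i j k))"
    by (rule isplit) (use assms in auto)
  have 1: "(\<Sum>k\<in>{0..n-i}. real_of_int (Mn n i j k)) = (\<Sum>k\<in>{0..n-i}. I * real_of_int k)"
  proof (rule sum.cong)
    fix k assume "k \<in> {0..n-i}"
    then have k: "0 \<le> k" "k \<le> n - i" by auto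
    show "real_of_int (Mn n i j k) = I * real_of_int k"
      using MnB[OF assms k(1)] k by (simp add: I_def)
  qed simp
  have 2: "(\<Sum>k\<in>{n-i+1..n}. real_of_int (Mn n i j k)) = (\<Sum>k\<in>{n-i+1..n}. real_of_int k * I - (real_of_int k - (N - I)) * (N - J))"
  proof (rule sum.cong)
    fix k assume "k \<in> {n-i+1..n}"
    then have k: "0 \<le> k" "\<not> k \<le> n - i" using assms by auto
    show "real_of_int (Mn n i j k) = real_of_int k * I - (real_of_int k - (N - I)) * (N - J)"
      using MnB[OF assms k(1)] k by (simp add: I_def J_def N_def)
  qed simp
  define F3 where "F3 = (\<lambda>x::real. ((1/2)*I*x + (1/2)*I*x^2))"
  have 3: "(\<Sum>k\<in>{0..n-i}. I * real_of_int k) = F3 (real_of_int (n-i)) - F3 (real_of_int (0) - 1)"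
    apply (rule tel[where f = "\<lambda>x. I * x"])
    subgoal for x unfolding F3_def A_def B_def U1_def U2_def by ((simp add: field_simps)?; (algebra)?)
    using assms by simp
  define F4 where "F4 = (\<lambda>x::real. ((1)*I*J + (1)*I*J*x + (-1)*I*N + (-1)*I*N*x + (1/2)*I*x + (1/2)*I*x^2 + (-1)*J*N + (-1)*J*N*x + (1/2)*J*x + (1/2)*J*x^2 + (-1/2)*N*x + (-1/2)*N*x^2 + (1)*N^2 + (1)*N^2*x))"
  have 4: "(\<Sum>k\<in>{n-i+1..n}. real_of_int k * I - (real_of_int k - (N - I)) * (N - J)) = F4 (real_of_int (n)) - F4 (real_of_int (n-i+1) - 1)"
    apply (rule tel[where f = "\<lambda>x. x * I - (x - (N - I)) * (N - J)"])
    subgoal for x unfolding F4_def A_def B_def U1_def U2_def by ((simp add: field_simps)?; (algebra)?)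
    using assms by simp
  show ?thesis unfolding s 1 2 3 4
    by (simp only: B_def F3_def F4_def of_int_diff of_int_add of_int_0 of_int_1 N_def[symmetric] I_def[symmetric] J_def[symmetric]) ((simp add: field_simps)?; (algebra)?)
qed

lemma kswap: "(\<Sum>k\<in>{0..n}. real_of_int (Mn n i j k)) = (\<Sum>k\<in>{0..n}. real_of_int (Mn n j i k))"
  by (simp add: Mn_sym)


lemma sU1:
  assumes "0 \<le> i" "2 * i \<le> n"
  shows "(\<Sum>j\<in>{0..n}. \<Sum>k\<in>{0..n}. real_of_int (Mn n i j k)) = U1 (real_of_int n) (real_of_int i)"
proof -
  define N I where "N = real_of_int n" and "I = real_of_int i"
  have s1: "(\<Sum>j\<in>{0..n}. \<Sum>k\<in>{0..n}. real_of_int (Mn n i j k)) = (\<Sum>j\<in>{0..i-1}. \<Sum>k\<in>{0..n}. real_of_int (Mn n i j k)) + (\<Sum>j\<in>{i-1+1..n}. \<Sum>k\<in>{0..n}. real_of_int (Mn n i j k))"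
    by (rule isplit) (use assms in auto)
  have s2: "(\<Sum>j\<in>{i-1+1..n}. \<Sum>k\<in>{0..n}. real_of_int (Mn n i j k)) = (\<Sum>j\<in>{i..n-i}. \<Sum>k\<in>{0..n}. real_of_int (Mn n i j k)) + (\<Sum>j\<in>{n-i+1..n}. \<Sum>k\<in>{0..n}. real_of_int (Mn n i j k))"
    using isplit[of i "n-i" n] assms by simp
  have c1: "(\<Sum>j\<in>{0..i-1}. \<Sum>k\<in>{0..n}. real_of_int (Mn n i j k)) = (\<Sum>j\<in>{0..i-1}. A N (real_of_int j) I)"
  proof (rule sum.cong)
    fix j assume "j \<in> {0..i-1}"
    then have j: "0 \<le> j" "j \<le> i" "j + i \<le> n" using assms by auto
    show "(\<Sum>k\<in>{0..n}. real_of_int (Mn n i j k)) = A N (real_of_int j) I"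
      unfolding kswap[of n i j] using kA[OF j] by (simp add: N_def I_def)
  qed simp
  have c2: "(\<Sum>j\<in>{i..n-i}. \<Sum>k\<in>{0..n}. real_of_int (Mn n i j k)) = (\<Sum>j\<in>{i..n-i}. A N I (real_of_int j))"
  proof (rule sum.cong)
    fix j assume "j \<in> {i..n-i}"
    then have j: "0 \<le> i" "i \<le> j" "i + j \<le> n" using assms by auto
    show "(\<Sum>k\<in>{0..n}. real_of_int (Mn n i j k)) = A N I (real_of_int j)"
      using kA[OF j] by (simp add: N_def I_def)
  qed simp
  have c3: "(\<Sum>j\<in>{n-i+1..n}. \<Sum>k\<in>{0..n}. real_of_int (Mn n i j k)) = (\<Sum>j\<in>{n-i+1..n}. B N I (real_of_int j))"
  proof (rule sum.cong)
    fix j assume "j \<in> {n-i+1..n}"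
    then have j: "0 \<le> i" "i \<le> j" "j \<le> n" "n < i + j" using assms by auto
    show "(\<Sum>k\<in>{0..n}. real_of_int (Mn n i j k)) = B N I (real_of_int j)"
      using kB[OF j] by (simp add: N_def I_def)
  qed simp
  define F5 where "F5 = (\<lambda>x::real. ((1/2)*I*N*x + (1/2)*I*N*x^2 + (1/4)*I*x + (1/4)*I*x^2 + (-1/4)*I^2*x + (-1/4)*I^2*x^2))"
  have t1: "(\<Sum>k\<in>{0..i-1}. A N (real_of_int k) I) = F5 (real_of_int (i-1)) - F5 (real_of_int (0) - 1)"
    apply (rule tel[where f = "\<lambda>x. A N (x) I"])
    subgoal for x unfolding F5_def A_def B_def U1_def U2_def by ((simp add: field_simps)?; (algebra)?)
    using assms by simp
  define F6 where "F6 = (\<lambda>x::real. ((1/2)*I*N*x + (1/2)*I*N*x^2 + (1/6)*I*x + (-1/6)*I*x^3))"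
  have t2: "(\<Sum>k\<in>{i..n-i}. A N I (real_of_int k)) = F6 (real_of_int (n-i)) - F6 (real_of_int (i) - 1)"
    apply (rule tel[where f = "\<lambda>x. A N I (x)"])
    subgoal for x unfolding F6_def A_def B_def U1_def U2_def by ((simp add: field_simps)?; (algebra)?)
    using assms by simp
  define F7 where "F7 = (\<lambda>x::real. ((1/2)*I*N^2 + (1/2)*I*N^2*x + (1/4)*I*x + (1/4)*I*x^2 + (-1/2)*I^2*N + (-1/2)*I^2*N*x + (1/4)*I^2*x + (1/4)*I^2*x^2))"
  have t3: "(\<Sum>k\<in>{n-i+1..n}. B N I (real_of_int k)) = F7 (real_of_int (n)) - F7 (real_of_int (n-i+1) - 1)"
    apply (rule tel[where f = "\<lambda>x. B N I (x)"])
    subgoal for x unfolding F7_def A_def B_def U1_def U2_def by ((simp add: field_simps)?; (algebra)?)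
    using assms by simp
  show ?thesis unfolding s1 s2 c1 c2 c3 t1 t2 t3
    by (simp only: U1_def F5_def F6_def F7_def of_int_diff of_int_add of_int_0 of_int_1 N_def[symmetric] I_def[symmetric]) ((simp add: field_simps)?; (algebra)?)
qed

lemma sU2:
  assumes "i \<le> n" "n < 2 * i"
  shows "(\<Sum>j\<in>{0..n}. \<Sum>k\<in>{0..n}. real_of_int (Mn n i j k)) = U2 (real_of_int n) (real_of_int i)"
proof -
  define N I where "N = real_of_int n" and "I = real_of_int i"
  have s1: "(\<Sum>j\<in>{0..n}. \<Sum>k\<in>{0..n}. real_of_int (Mn n i j k)) = (\<Sum>j\<in>{0..n-i}. \<Sum>k\<in>{0..n}. real_of_int (Mn n i j k)) + (\<Sum>j\<in>{n-i+1..n}. \<Sum>k\<in>{0..n}. real_of_int (Mn n i j k))"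
    by (rule isplit) (use assms in auto)
  have s2: "(\<Sum>j\<in>{n-i+1..n}. \<Sum>k\<in>{0..n}. real_of_int (Mn n i j k)) = (\<Sum>j\<in>{n-i+1..i-1}. \<Sum>k\<in>{0..n}. real_of_int (Mn n i j k)) + (\<Sum>j\<in>{i-1+1..n}. \<Sum>k\<in>{0..n}. real_of_int (Mn n i j k))"
    by (rule isplit) (use assms in auto)
  have s3: "i - 1 + 1 = i" by simp
  have c1: "(\<Sum>j\<in>{0..n-i}. \<Sum>k\<in>{0..n}. real_of_int (Mn n i j k)) = (\<Sum>j\<in>{0..n-i}. A N (real_of_int j) I)"
  proof (rule sum.cong)
    fix j assume "j \<in> {0..n-i}"
    then have j: "0 \<le> j" "j \<le> i" "j + i \<le> n" using assms by auto
    show "(\<Sum>k\<in>{0..n}. real_of_int (Mn n i j k)) = A N (real_of_int j) I"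
      unfolding kswap[of n i j] using kA[OF j] by (simp add: N_def I_def)
  qed simp
  have c2: "(\<Sum>j\<in>{n-i+1..i-1}. \<Sum>k\<in>{0..n}. real_of_int (Mn n i j k)) = (\<Sum>j\<in>{n-i+1..i-1}. B N (real_of_int j) I)"
  proof (rule sum.cong)
    fix j assume "j \<in> {n-i+1..i-1}"
    then have j: "0 \<le> j" "j \<le> i" "i \<le> n" "n < j + i" using assms by auto
    show "(\<Sum>k\<in>{0..n}. real_of_int (Mn n i j k)) = B N (real_of_int j) I"
      unfolding kswap[of n i j] using kB[OF j] by (simp add: N_def I_def)
  qed simp
  have c3: "(\<Sum>j\<in>{i..n}. \<Sum>k\<in>{0..n}. real_of_int (Mn n i j k)) = (\<Sum>j\<in>{i..n}. B N I (real_of_int j))"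
  proof (rule sum.cong)
    fix j assume "j \<in> {i..n}"
    then have j: "0 \<le> i" "i \<le> j" "j \<le> n" "n < i + j" using assms by auto
    show "(\<Sum>k\<in>{0..n}. real_of_int (Mn n i j k)) = B N I (real_of_int j)"
      using kB[OF j] by (simp add: N_def I_def)
  qed simp
  define F8 where "F8 = (\<lambda>x::real. ((1/2)*I*N*x + (1/2)*I*N*x^2 + (1/4)*I*x + (1/4)*I*x^2 + (-1/4)*I^2*x + (-1/4)*I^2*x^2))"
  have t1: "(\<Sum>k\<in>{0..n-i}. A N (real_of_int k) I) = F8 (real_of_int (n-i)) - F8 (real_of_int (0) - 1)"
    apply (rule tel[where f = "\<lambda>x. A N (x) I"])
    subgoal for x unfolding F8_def A_def B_def U1_def U2_def by ((simp add: field_simps)?; (algebra)?)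
    using assms by simp
  define F9 where "F9 = (\<lambda>x::real. ((1/3)*I*x + (1/2)*I*x^2 + (1/6)*I*x^3 + (-1/12)*N*x + (-1/4)*N*x^2 + (-1/6)*N*x^3 + (1/4)*N^2*x + (1/4)*N^2*x^2))"
  have t2: "(\<Sum>k\<in>{n-i+1..i-1}. B N (real_of_int k) I) = F9 (real_of_int (i-1)) - F9 (real_of_int (n-i+1) - 1)"
    apply (rule tel[where f = "\<lambda>x. B N (x) I"])
    subgoal for x unfolding F9_def A_def B_def U1_def U2_def by ((simp add: field_simps)?; (algebra)?)
    using assms by simp
  define F10 where "F10 = (\<lambda>x::real. ((1/2)*I*N^2 + (1/2)*I*N^2*x + (1/4)*I*x + (1/4)*I*x^2 + (-1/2)*I^2*N + (-1/2)*I^2*N*x + (1/4)*I^2*x + (1/4)*I^2*x^2))"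
  have t3: "(\<Sum>k\<in>{i..n}. B N I (real_of_int k)) = F10 (real_of_int (n)) - F10 (real_of_int (i) - 1)"
    apply (rule tel[where f = "\<lambda>x. B N I (x)"])
    subgoal for x unfolding F10_def A_def B_def U1_def U2_def by ((simp add: field_simps)?; (algebra)?)
    using assms by simp
  show ?thesis unfolding s1 s2 s3 c1 c2 c3 t1 t2 t3
    by (simp only: U2_def F8_def F9_def F10_def of_int_diff of_int_add of_int_0 of_int_1 N_def[symmetric] I_def[symmetric]) ((simp add: field_simps)?; (algebra)?)
qed


lemma totE:
  assumes "n = 2 * m" "0 \<le> m"
  shows "(\<Sum>i\<in>{0..n}. \<Sum>j\<in>{0..n}. \<Sum>k\<in>{0..n}. real_of_int (Mn n i j k)) = (69 * real_of_int n ^ 5 + 180 * real_of_int n ^ 4 + 170 * real_of_int n ^ 3 + 60 * real_of_int n ^ 2 + 16 * real_of_int n) / 480"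
proof -
  define N M where "N = real_of_int n" and "M = real_of_int m"
  have NM: "N = 2 * M" using assms(1) by (simp add: N_def M_def)
  have s: "(\<Sum>i\<in>{0..n}. \<Sum>j\<in>{0..n}. \<Sum>k\<in>{0..n}. real_of_int (Mn n i j k)) = (\<Sum>i\<in>{0..m}. \<Sum>j\<in>{0..n}. \<Sum>k\<in>{0..n}. real_of_int (Mn n i j k)) + (\<Sum>i\<in>{m+1..n}. \<Sum>j\<in>{0..n}. \<Sum>k\<in>{0..n}. real_of_int (Mn n i j k))"
    by (rule isplit) (use assms in auto)
  have c1: "(\<Sum>i\<in>{0..m}. \<Sum>j\<in>{0..n}. \<Sum>k\<in>{0..n}. real_of_int (Mn n i j k)) = (\<Sum>i\<in>{0..m}. U1 N (real_of_int i))"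
  proof (rule sum.cong)
    fix i assume "i \<in> {0..m}"
    then have i: "0 \<le> i" "2 * i \<le> n" using assms by auto
    show "(\<Sum>j\<in>{0..n}. \<Sum>k\<in>{0..n}. real_of_int (Mn n i j k)) = U1 N (real_of_int i)"
      using sU1[OF i] by (simp add: N_def)
  qed simp
  have c2: "(\<Sum>i\<in>{m+1..n}. \<Sum>j\<in>{0..n}. \<Sum>k\<in>{0..n}. real_of_int (Mn n i j k)) = (\<Sum>i\<in>{m+1..n}. U2 N (real_of_int i))"
  proof (rule sum.cong)
    fix i assume "i \<in> {m+1..n}"
    then have i: "i \<le> n" "n < 2 * i" using assms by auto
    show "(\<Sum>j\<in>{0..n}. \<Sum>k\<in>{0..n}. real_of_int (Mn n i j k)) = U2 N (real_of_int i)"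
      using sU2[OF i] by (simp add: N_def)
  qed simp
  define F11 where "F11 = (\<lambda>x::real. ((1/12)*N*x + (1/12)*N*x^2 + (1/4)*N^2*x + (1/4)*N^2*x^2 + (1/6)*N^3*x + (1/6)*N^3*x^2 + (1/30)*x + (1/12)*x^2 + (-1/12)*x^4 + (-1/30)*x^5))"
  have t1: "(\<Sum>k\<in>{0..m}. U1 N (real_of_int k)) = F11 (real_of_int (m)) - F11 (real_of_int (0) - 1)"
    apply (rule tel[where f = "\<lambda>x. U1 N (x)"])
    subgoal for x unfolding F11_def A_def B_def U1_def U2_def by ((simp add: field_simps)?; (algebra)?)
    using assms by simp
  define F12 where "F12 = (\<lambda>x::real. ((1/6)*N*x^2 + (1/3)*N*x^3 + (1/6)*N*x^4 + (1/12)*N^2 + (1/6)*N^2*x + (-1/4)*N^2*x^2 + (-1/3)*N^2*x^3 + (5/12)*N^3*x + (5/12)*N^3*x^2 + (-1/12)*N^4 + (-1/12)*N^4*x + (1/30)*x + (1/12)*x^2 + (-1/12)*x^4 + (-1/30)*x^5))"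
  have t2: "(\<Sum>k\<in>{m+1..n}. U2 N (real_of_int k)) = F12 (real_of_int (n)) - F12 (real_of_int (m+1) - 1)"
    apply (rule tel[where f = "\<lambda>x. U2 N (x)"])
    subgoal for x unfolding F12_def A_def B_def U1_def U2_def by ((simp add: field_simps)?; (algebra)?)
    using assms by simp
  show ?thesis unfolding s c1 c2 t1 t2
    by (simp only: F11_def F12_def of_int_diff of_int_add of_int_0 of_int_1 N_def[symmetric] M_def[symmetric] NM) ((simp add: field_simps)?; (algebra)?)
qed

lemma totO:
  assumes "n = 2 * m + 1" "0 \<le> m"
  shows "(\<Sum>i\<in>{0..n}. \<Sum>j\<in>{0..n}. \<Sum>k\<in>{0..n}. real_of_int (Mn n i j k)) = (69 * real_of_int n ^ 5 + 180 * real_of_int n ^ 4 + 170 * real_of_int n ^ 3 + 60 * real_of_int n ^ 2 + 1 * real_of_int n) / 480"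
proof -
  define N M where "N = real_of_int n" and "M = real_of_int m"
  have NM: "N = 2 * M + 1" using assms(1) by (simp add: N_def M_def)
  have s: "(\<Sum>i\<in>{0..n}. \<Sum>j\<in>{0..n}. \<Sum>k\<in>{0..n}. real_of_int (Mn n i j k)) = (\<Sum>i\<in>{0..m}. \<Sum>j\<in>{0..n}. \<Sum>k\<in>{0..n}. real_of_int (Mn n i j k)) + (\<Sum>i\<in>{m+1..n}. \<Sum>j\<in>{0..n}. \<Sum>k\<in>{0..n}. real_of_int (Mn n i j k))"
    by (rule isplit) (use assms in auto)
  have c1: "(\<Sum>i\<in>{0..m}. \<Sum>j\<in>{0..n}. \<Sum>k\<in>{0..n}. real_of_int (Mn n i j k)) = (\<Sum>i\<in>{0..m}. U1 N (real_of_int i))"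
  proof (rule sum.cong)
    fix i assume "i \<in> {0..m}"
    then have i: "0 \<le> i" "2 * i \<le> n" using assms by auto
    show "(\<Sum>j\<in>{0..n}. \<Sum>k\<in>{0..n}. real_of_int (Mn n i j k)) = U1 N (real_of_int i)"
      using sU1[OF i] by (simp add: N_def)
  qed simp
  have c2: "(\<Sum>i\<in>{m+1..n}. \<Sum>j\<in>{0..n}. \<Sum>k\<in>{0..n}. real_of_int (Mn n i j k)) = (\<Sum>i\<in>{m+1..n}. U2 N (real_of_int i))"
  proof (rule sum.cong)
    fix i assume "i \<in> {m+1..n}"
    then have i: "i \<le> n" "n < 2 * i" using assms by auto
    show "(\<Sum>j\<in>{0..n}. \<Sum>k\<in>{0..n}. real_of_int (Mn n i j k)) = U2 N (real_of_int i)"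
      using sU2[OF i] by (simp add: N_def)
  qed simp
  define F13 where "F13 = (\<lambda>x::real. ((1/12)*N*x + (1/12)*N*x^2 + (1/4)*N^2*x + (1/4)*N^2*x^2 + (1/6)*N^3*x + (1/6)*N^3*x^2 + (1/30)*x + (1/12)*x^2 + (-1/12)*x^4 + (-1/30)*x^5))"
  have t1: "(\<Sum>k\<in>{0..m}. U1 N (real_of_int k)) = F13 (real_of_int (m)) - F13 (real_of_int (0) - 1)"
    apply (rule tel[where f = "\<lambda>x. U1 N (x)"])
    subgoal for x unfolding F13_def A_def B_def U1_def U2_def by ((simp add: field_simps)?; (algebra)?)
    using assms by simp
  define F14 where "F14 = (\<lambda>x::real. ((1/6)*N*x^2 + (1/3)*N*x^3 + (1/6)*N*x^4 + (1/12)*N^2 + (1/6)*N^2*x + (-1/4)*N^2*x^2 + (-1/3)*N^2*x^3 + (5/12)*N^3*x + (5/12)*N^3*x^2 + (-1/12)*N^4 + (-1/12)*N^4*x + (1/30)*x + (1/12)*x^2 + (-1/12)*x^4 + (-1/30)*x^5))"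
  have t2: "(\<Sum>k\<in>{m+1..n}. U2 N (real_of_int k)) = F14 (real_of_int (n)) - F14 (real_of_int (m+1) - 1)"
    apply (rule tel[where f = "\<lambda>x. U2 N (x)"])
    subgoal for x unfolding F14_def A_def B_def U1_def U2_def by ((simp add: field_simps)?; (algebra)?)
    using assms by simp
  show ?thesis unfolding s c1 c2 t1 t2
    by (simp only: F13_def F14_def of_int_diff of_int_add of_int_0 of_int_1 N_def[symmetric] M_def[symmetric] NM) ((simp add: field_simps)?; (algebra)?)
qed

theorem mainTheorem10:
  fixes n :: nat
  assumes "n \<ge> 1"
  shows "real_of_int (\<Sum>i\<in>{0..int n}. \<Sum>j\<in>{0..int n}. \<Sum>k\<in>{0..int n}. Mn (int n) i j k)
       = (69 * real n ^ 5 + 180 * real n ^ 4 + 170 * real n ^ 3 + 60 * real n ^ 2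
          + 4 powi (1 + (-1::int) ^ n) * real n) / 480"
proof -
  have e: "real_of_int (\<Sum>i\<in>{0..int n}. \<Sum>j\<in>{0..int n}. \<Sum>k\<in>{0..int n}. Mn (int n) i j k)
     = (\<Sum>i\<in>{0..int n}. \<Sum>j\<in>{0..int n}. \<Sum>k\<in>{0..int n}. real_of_int (Mn (int n) i j k))"
    by (simp only: of_int_sum)
  show ?thesis
  proof (cases "even n")
    case True
    then obtain m where m: "n = 2 * m" by blast
    have p: "(4::real) powi (1 + (-1::int) ^ n) = 16" using True by simp
    show ?thesis unfolding e p using totE[of "int n" "int m"] m by simp
  next
    case False
    then obtain m where m: "n = 2 * m + 1" using oddE by blast
    have p: "(4::real) powi (1 + (-1::int) ^ n) = 1" using False by simp
    show ?thesis unfolding e p using totO[of "int n" "int m"] m by simp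
  qed
qed

end
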